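(* Let $Z$ be the precubical set with exactly one cube $z^n$ in each dimension $n\ge0$, and let $J(S^1)=J(S^1,1)$ be the James construction on the circle. The map $f:|Z|\to J(S^1)$ given by $f([z^n;x_1,\dots,x_n])=(e^{2\pi i x_1},\dots,e^{2\pi i x_n})$ is a well-defined homeomorphism.
   Context: A precubical set $K$ has sets $K[n]$ of $n$-cubes and face maps $d^\varepsilon_i:K[n]\to K[n-1]$ ($1\le i\le n$, $\varepsilon\in\{0,1\}$); for $Z$ necessarily $d^\varepsilon_i z^n=z^{n-1}$. The geometric realization $|K|=\coprod_n K[n]\times[0,1]^n/\sim$, with $(d^\varepsilon_i c,\mathbf x)\sim(c,\delta^\varepsilon_i\mathbf x)$ where $\delta^\varepsilon_i(x_1,\dots,x_{n-1})=(x_1,\dots,x_{i-1},\varepsilon,x_i,\dots,x_{n-1})$, carries the quotient topology; $[c;\mathbf x]$ is the class. For a pointed space $(X,x_0)$, $J_n(X)$ is the quotient of $X^n$ by $(x_1,\dots,x_i,x_0,x_{i+1},\dots,x_{n-1})\sim(x_1,\dots,x_0,x_i,x_{i+1},\dots,x_{n-1})$ (moving the base point), with inclusions $J_n(X)\subseteq J_{n+1}(X)$ appending $x_0$ in the last position, and $J(X)=\mathrm{colim}_n J_n(X)$ (the free topological monoid on $(X,x_0)$); the class of $(y_1,\dots,y_n)$ is written $(y_1,\dots,y_n)$. *)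

theory Defs
  imports "HOL-Analysis.Analysis"
begin

text \<open>Equivalence relation on A generated by a relation r (assumed to lie in A x A).\<close>
definition gen_equiv :: "'a set \<Rightarrow> ('a \<times> 'a) set \<Rightarrow> ('a \<times> 'a) set" where
  "gen_equiv A r = (r \<union> r\<inverse>)\<^sup>* \<inter> (A \<times> A)"

definition quot_topology :: "'a topology \<Rightarrow> ('a \<times> 'a) set \<Rightarrow> 'a set topology" where
  "quot_topology X R =
     topology (\<lambda>U. U \<subseteq> topspace X // R \<and> openin X (\<Union>U))"

definition cls :: "('a \<times> 'a) set \<Rightarrow> 'a \<Rightarrow> 'a set" where
  "cls R a = R `` {a}"

text \<open>Points of [0,1]^n are extensional functions on {..<n}; coordinate x_k
  (1-based, as in the paper) is the value at k-1.\<close>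
definition cube_top :: "nat \<Rightarrow> (nat \<Rightarrow> real) topology" where
  "cube_top n = product_topology (\<lambda>_. top_of_set {0..1::real}) {..<n}"

text \<open>Coface map delta_i^e : [0,1]^(n-1) \<rightarrow> [0,1]^n, inserting e at position i
  (1-based, 1 \<le> i \<le> n).\<close>
definition coface :: "nat \<Rightarrow> nat \<Rightarrow> real \<Rightarrow> (nat \<Rightarrow> real) \<Rightarrow> (nat \<Rightarrow> real)" where
  "coface n i e x = (\<lambda>j\<in>{..<n}. if j < i - 1 then x j else if j = i - 1 then e else x (j - 1))"

text \<open>A precubical set is given by its sets of n-cubes K n and face maps
  d n i e : K n \<rightarrow> K (n-1) (1 \<le> i \<le> n, e \<in> {0,1} encoded as bool, True = 1).\<close>


definition cubes_sum :: "(nat \<Rightarrow> 'c set) \<Rightarrow> (nat \<times> ('c \<times> (nat \<Rightarrow> real))) topology" where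
  "cubes_sum K = sum_topology (\<lambda>n. prod_topology (discrete_topology (K n)) (cube_top n)) UNIV"

definition realization_rel ::
  "(nat \<Rightarrow> 'c set) \<Rightarrow> (nat \<Rightarrow> nat \<Rightarrow> bool \<Rightarrow> 'c \<Rightarrow> 'c)
     \<Rightarrow> ((nat \<times> ('c \<times> (nat \<Rightarrow> real))) \<times> (nat \<times> ('c \<times> (nat \<Rightarrow> real)))) set" where
  "realization_rel K d =
     {((m, (d (Suc m) i e c, x)), (Suc m, (c, coface (Suc m) i (if e then 1 else 0) x))) | m i e c x.
        c \<in> K (Suc m) \<and> 1 \<le> i \<and> i \<le> Suc m \<and> x \<in> topspace (cube_top m)}"

definition realization ::
  "(nat \<Rightarrow> 'c set) \<Rightarrow> (nat \<Rightarrow> nat \<Rightarrow> bool \<Rightarrow> 'c \<Rightarrow> 'c)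
     \<Rightarrow> (nat \<times> ('c \<times> (nat \<Rightarrow> real))) set topology" where
  "realization K d = quot_topology (cubes_sum K) (gen_equiv (topspace (cubes_sum K)) (realization_rel K d))"

definition Z_cubes :: "nat \<Rightarrow> unit set" where "Z_cubes n = {()}"
definition Z_face :: "nat \<Rightarrow> nat \<Rightarrow> bool \<Rightarrow> unit \<Rightarrow> unit" where "Z_face n i e c = ()"

definition pow_top :: "'a topology \<Rightarrow> nat \<Rightarrow> (nat \<Rightarrow> 'a) topology" where
  "pow_top X n = product_topology (\<lambda>_. X) {..<n}"

text \<open>Moving the base point one slot to the left:
  (..., y_i, x0, ...) ~ (..., x0, y_i, ...).\<close>
definition james_rel :: "'a topology \<Rightarrow> 'a \<Rightarrow> nat \<Rightarrow> ((nat \<Rightarrow> 'a) \<times> (nat \<Rightarrow> 'a)) set" where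
  "james_rel X x0 n =
     {(y, y(k := x0, Suc k := y k)) | y k. y \<in> topspace (pow_top X n) \<and> Suc k < n \<and> y (Suc k) = x0}"

definition J_n :: "'a topology \<Rightarrow> 'a \<Rightarrow> nat \<Rightarrow> (nat \<Rightarrow> 'a) set topology" where
  "J_n X x0 n = quot_topology (pow_top X n) (gen_equiv (topspace (pow_top X n)) (james_rel X x0 n))"

definition J_incl :: "'a topology \<Rightarrow> 'a \<Rightarrow> nat \<Rightarrow> (nat \<Rightarrow> 'a) set \<Rightarrow> (nat \<Rightarrow> 'a) set" where
  "J_incl X x0 n C =
     cls (gen_equiv (topspace (pow_top X (Suc n))) (james_rel X x0 (Suc n))) ((SOME y. y \<in> C)(n := x0))"

text \<open>Colimit of the sequence J_0 \<rightarrow> J_1 \<rightarrow> ...: quotient of the disjoint sum by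
  the relation identifying a point with its image under the inclusion.\<close>
definition J_sum :: "'a topology \<Rightarrow> 'a \<Rightarrow> (nat \<times> (nat \<Rightarrow> 'a) set) topology" where
  "J_sum X x0 = sum_topology (J_n X x0) UNIV"

definition J_colim_rel :: "'a topology \<Rightarrow> 'a \<Rightarrow> ((nat \<times> (nat \<Rightarrow> 'a) set) \<times> (nat \<times> (nat \<Rightarrow> 'a) set)) set" where
  "J_colim_rel X x0 = {((n, C), (Suc n, J_incl X x0 n C)) | n C. C \<in> topspace (J_n X x0 n)}"

definition James :: "'a topology \<Rightarrow> 'a \<Rightarrow> (nat \<times> (nat \<Rightarrow> 'a) set) set topology" where
  "James X x0 = quot_topology (J_sum X x0) (gen_equiv (topspace (J_sum X x0)) (J_colim_rel X x0))"

definition James_pt :: "'a topology \<Rightarrow> 'a \<Rightarrow> nat \<Rightarrow> (nat \<Rightarrow> 'a) \<Rightarrow> (nat \<times> (nat \<Rightarrow> 'a) set) set" where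
  "James_pt X x0 n y =
     cls (gen_equiv (topspace (J_sum X x0)) (J_colim_rel X x0))
       (n, cls (gen_equiv (topspace (pow_top X n)) (james_rel X x0 n)) y)"

definition circle :: "complex topology" where "circle = top_of_set (sphere 0 1)"

end

theory Submission
  imports Defs
begin


lemma equiv_gen_equiv: "equiv A (gen_equiv A r)"
proof -
  have s: "sym ((r \<union> r\<inverse>)\<^sup>*)" by (simp add: sym_Un_converse sym_rtrancl)
  show ?thesis
    unfolding equiv_def gen_equiv_def refl_on_def sym_def trans_def
    using s by (auto simp: sym_def intro: rtrancl_trans)
qed

lemma gen_equiv_step: "(a,b) \<in> r \<Longrightarrow> a \<in> A \<Longrightarrow> b \<in> A \<Longrightarrow> (a,b) \<in> gen_equiv A r"
  by (auto simp: gen_equiv_def)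

lemma gen_equiv_inv:
  assumes "\<And>a b. (a,b) \<in> r \<Longrightarrow> f a = f b" and "(a,b) \<in> gen_equiv A r"
  shows "f a = f b"
proof -
  have "(a,b) \<in> (r \<union> r\<inverse>)\<^sup>*" using assms(2) by (simp add: gen_equiv_def)
  then show ?thesis
    by (induction rule: rtrancl_induct) (auto dest: assms(1))
qed

lemma gen_equiv_map:
  assumes "r \<subseteq> A \<times> A" and "f ` A \<subseteq> B"
    and "\<And>a b. (a,b) \<in> r \<Longrightarrow> (f a, f b) \<in> s"
    and "(a,b) \<in> gen_equiv A r"
  shows "(f a, f b) \<in> gen_equiv B s"
proof -
  have ab: "(a,b) \<in> (r \<union> r\<inverse>)\<^sup>*" "a \<in> A" using assms(4) by (auto simp: gen_equiv_def)
  have "(f a, f b) \<in> (s \<union> s\<inverse>)\<^sup>* \<and> b \<in> A"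
    using ab
  proof (induction rule: rtrancl_induct)
    case base then show ?case by simp
  next
    case (step y z)
    then have "(f y, f z) \<in> s \<union> s\<inverse>" "z \<in> A" using assms(1,3) by auto
    then show ?case using step by (auto intro: rtrancl_into_rtrancl)
  qed
  then show ?thesis using ab assms(2) by (auto simp: gen_equiv_def)
qed

lemma cls_eqI: "(a,b) \<in> gen_equiv A r \<Longrightarrow> cls (gen_equiv A r) a = cls (gen_equiv A r) b"
  unfolding cls_def by (rule equiv_class_eq[OF equiv_gen_equiv])

lemma cls_eq_iff: "a \<in> A \<Longrightarrow> b \<in> A \<Longrightarrow>
   cls (gen_equiv A r) a = cls (gen_equiv A r) b \<longleftrightarrow> (a,b) \<in> gen_equiv A r"
  unfolding cls_def by (rule eq_equiv_class_iff[OF equiv_gen_equiv])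

lemma cls_mem: "a \<in> A \<Longrightarrow> a \<in> cls (gen_equiv A r) a"
  by (auto simp: cls_def gen_equiv_def)

lemma cls_SOME: "a \<in> A \<Longrightarrow> (a, SOME b. b \<in> cls (gen_equiv A r) a) \<in> gen_equiv A r"
  using someI[of "\<lambda>b. b \<in> cls (gen_equiv A r) a" a] cls_mem[of a A r] by (auto simp: cls_def)

lemma openin_quot:
  assumes "equiv (topspace X) R"
  shows "openin (quot_topology X R) U \<longleftrightarrow> U \<subseteq> topspace X // R \<and> openin X (\<Union>U)"
proof -
  have "istopology (\<lambda>U. U \<subseteq> topspace X // R \<and> openin X (\<Union>U))"
    unfolding istopology_def
  proof (intro conjI allI impI)
    fix S T assume ST: "S \<subseteq> topspace X // R \<and> openin X (\<Union>S)" "T \<subseteq> topspace X // R \<and> openin X (\<Union>T)"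
    then have S: "S \<subseteq> topspace X // R" and T: "T \<subseteq> topspace X // R"
      and oS: "openin X (\<Union>S)" and oT: "openin X (\<Union>T)" by auto
    have "\<Union>S \<inter> \<Union>T \<subseteq> \<Union>(S \<inter> T)"
    proof
      fix x assume "x \<in> \<Union>S \<inter> \<Union>T"
      then obtain C D where "C \<in> S" "D \<in> T" "x \<in> C" "x \<in> D" by auto
      moreover have "C = D \<or> C \<inter> D = {}"
        using quotient_disj[OF assms] S T \<open>C \<in> S\<close> \<open>D \<in> T\<close> by blast
      ultimately show "x \<in> \<Union>(S \<inter> T)" by auto
    qed
    then have "\<Union>(S \<inter> T) = \<Union>S \<inter> \<Union>T" by auto
    then show "openin X (\<Union>(S \<inter> T))" using oS oT S by auto
    show "S \<inter> T \<subseteq> topspace X // R" using S by auto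
  next
    fix K assume "\<forall>K\<in>K. K \<subseteq> topspace X // R \<and> openin X (\<Union> K)"
    then show "\<Union>K \<subseteq> topspace X // R" by auto
    have "\<Union>(\<Union>K) = \<Union>(Union ` K)" by auto
    moreover have "openin X (\<Union>(Union ` K))"
      using \<open>\<forall>K\<in>K. K \<subseteq> topspace X // R \<and> openin X (\<Union> K)\<close> by (intro openin_Union) auto
    ultimately show "openin X (\<Union>(\<Union>K))" by simp
  qed
  then show ?thesis unfolding quot_topology_def by (simp add: topology_inverse')
qed

lemma topspace_quot:
  assumes "equiv (topspace X) R"
  shows "topspace (quot_topology X R) = topspace X // R"
proof -
  have "openin (quot_topology X R) (topspace X // R)"
    using assms by (simp add: openin_quot Union_quotient)
  then have "topspace X // R \<subseteq> topspace (quot_topology X R)" by (rule openin_subset)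
  moreover have "topspace (quot_topology X R) \<subseteq> topspace X // R"
    using openin_quot[OF assms, of "topspace (quot_topology X R)"] by auto
  ultimately show ?thesis by auto
qed

lemma Union_pre_quot:
  assumes "equiv (topspace X) R"
  shows "\<Union>{C \<in> topspace X // R. P C} = {x \<in> topspace X. P (R``{x})}"
proof safe
  fix x C assume "x \<in> C" "C \<in> topspace X // R" "P C"
  then show "x \<in> topspace X" using assms
    by (meson in_quotient_imp_subset subsetD)
  from \<open>C \<in> topspace X // R\<close> obtain a where "a \<in> topspace X" "C = R``{a}" by (auto elim: quotientE)
  then have "R``{x} = C" using \<open>x \<in> C\<close> assms by (metis Image_singleton_iff equiv_class_eq)
  then show "P (R``{x})" using \<open>P C\<close> by simp
next
  fix x assume "x \<in> topspace X" "P (R``{x})"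
  then show "x \<in> \<Union>{C \<in> topspace X // R. P C}"
    using assms by (intro UnionI[of "R``{x}"]) (auto intro!: quotientI simp: equiv_def refl_on_def)
qed

lemma continuous_map_cls:
  assumes "equiv (topspace X) R"
  shows "continuous_map X (quot_topology X R) (cls R)"
  unfolding continuous_map_def
proof safe
  fix x assume "x \<in> topspace X"
  then show "cls R x \<in> topspace (quot_topology X R)"
    by (simp add: topspace_quot[OF assms] cls_def quotientI)
next
  fix U assume U: "openin (quot_topology X R) U"
  then have sub: "U \<subseteq> topspace X // R" and o: "openin X (\<Union>U)" by (auto simp: openin_quot[OF assms])
  have "{x \<in> topspace X. cls R x \<in> U} = \<Union>{C \<in> topspace X // R. C \<in> U}"
    by (simp add: Union_pre_quot[OF assms] cls_def)
  also have "\<dots> = \<Union>U" using sub by auto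
  finally show "openin X {x \<in> topspace X. cls R x \<in> U}" using o by simp
qed

lemma continuous_map_from_quot:
  assumes "equiv (topspace X) R" and "continuous_map X Y (\<lambda>x. g (cls R x))"
  shows "continuous_map (quot_topology X R) Y g"
  unfolding continuous_map_def
proof safe
  fix C assume "C \<in> topspace (quot_topology X R)"
  then obtain a where "a \<in> topspace X" "C = cls R a"
    by (auto simp: topspace_quot[OF assms(1)] cls_def elim: quotientE)
  then show "g C \<in> topspace Y" using assms(2) by (auto simp: continuous_map_def)
next
  fix U assume U: "openin Y U"
  have "\<Union>{C \<in> topspace X // R. g C \<in> U} = {x \<in> topspace X. g (cls R x) \<in> U}"
    by (simp add: Union_pre_quot[OF assms(1)] cls_def)
  then have "openin X (\<Union>{C \<in> topspace X // R. g C \<in> U})"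
    using assms(2) U by (simp add: continuous_map_def)
  then show "openin (quot_topology X R) {C \<in> topspace (quot_topology X R). g C \<in> U}"
    by (simp add: openin_quot[OF assms(1)] topspace_quot[OF assms(1)])
qed

lemma continuous_map_from_sum:
  assumes "\<And>i. i \<in> I \<Longrightarrow> continuous_map (X i) Y (\<lambda>x. f (i,x))"
  shows "continuous_map (sum_topology X I) Y f"
  unfolding continuous_map_def
proof safe
  fix i x assume "(i,x) \<in> topspace (sum_topology X I)"
  then show "f (i,x) \<in> topspace Y" using assms by (auto simp: continuous_map_def)
next
  fix U assume U: "openin Y U"
  show "openin (sum_topology X I) {p \<in> topspace (sum_topology X I). f p \<in> U}"
    unfolding openin_sum_topology
  proof safe
    fix i assume "i \<in> I"
    have "{x. (i, x) \<in> {p \<in> topspace (sum_topology X I). f p \<in> U}} = {x \<in> topspace (X i). f (i,x) \<in> U}"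
      using \<open>i \<in> I\<close> by auto
    then show "openin (X i) {x. (i, x) \<in> {p \<in> topspace (sum_topology X I). f p \<in> U}}"
      using assms[OF \<open>i \<in> I\<close>] U by (simp add: continuous_map_def)
  qed auto
qed



abbreviation "RZ \<equiv> gen_equiv (topspace (cubes_sum Z_cubes)) (realization_rel Z_cubes Z_face)"
abbreviation "RJn n \<equiv> gen_equiv (topspace (pow_top circle n)) (james_rel circle (1::complex) n)"
abbreviation "RJ \<equiv> gen_equiv (topspace (J_sum circle (1::complex))) (J_colim_rel circle 1)"

lemma gen_equiv_sym: "(a,b) \<in> gen_equiv A r \<Longrightarrow> (b,a) \<in> gen_equiv A r"
  using equiv_gen_equiv[of A r] unfolding equiv_def sym_def by blast
lemma gen_equiv_trans: "(a,b) \<in> gen_equiv A r \<Longrightarrow> (b,c) \<in> gen_equiv A r \<Longrightarrow> (a,c) \<in> gen_equiv A r"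
  using equiv_gen_equiv[of A r] unfolding equiv_def trans_def by blast
lemma gen_equiv_refl: "a \<in> A \<Longrightarrow> (a,a) \<in> gen_equiv A r"
  by (auto simp: gen_equiv_def)

lemma top_cube: "topspace (cube_top n) = PiE {..<n} (\<lambda>_. {0..1::real})"
  by (simp add: cube_top_def)
lemma top_pow: "topspace (pow_top circle n) = PiE {..<n} (\<lambda>_. sphere (0::complex) 1)"
  by (simp add: pow_top_def circle_def)
lemma top_cs: "topspace (cubes_sum Z_cubes) = Sigma UNIV (\<lambda>n. {()} \<times> PiE {..<n} (\<lambda>_. {0..1::real}))"
  unfolding cubes_sum_def topspace_sum_topology by (simp add: top_cube Z_cubes_def o_def)
lemma top_Jn: "topspace (J_n circle 1 n) = topspace (pow_top circle n) // RJn n"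
  unfolding J_n_def by (rule topspace_quot[OF equiv_gen_equiv])
lemma top_Jsum: "topspace (J_sum circle 1) = Sigma UNIV (\<lambda>n. topspace (J_n circle (1::complex) n))"
  by (auto simp: J_sum_def)

definition insg :: "nat \<Rightarrow> nat \<Rightarrow> 'a \<Rightarrow> (nat \<Rightarrow> 'a) \<Rightarrow> (nat \<Rightarrow> 'a)" where
  "insg n j v z = (\<lambda>k\<in>{..<Suc n}. if k < j then z k else if k = j then v else z (k - 1))"
definition del :: "nat \<Rightarrow> nat \<Rightarrow> (nat \<Rightarrow> 'a) \<Rightarrow> (nat \<Rightarrow> 'a)" where
  "del n j y = (\<lambda>k\<in>{..<n}. if k < j then y k else y (Suc k))"

lemma coface_insg: "coface (Suc m) i e x = insg m (i - 1) e x"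
  by (auto simp: coface_def insg_def fun_eq_iff)

lemma insg_PiE: "z \<in> PiE {..<n} (\<lambda>_. S) \<Longrightarrow> v \<in> S \<Longrightarrow> j \<le> n \<Longrightarrow> insg n j v z \<in> PiE {..<Suc n} (\<lambda>_. S)"
  by (auto simp: insg_def PiE_iff)

lemma del_PiE: "y \<in> PiE {..<Suc n} (\<lambda>_. S) \<Longrightarrow> del n j y \<in> PiE {..<n} (\<lambda>_. S)"
  by (auto simp: del_def PiE_iff)

lemma insg_del: "y \<in> extensional {..<Suc n} \<Longrightarrow> j \<le> n \<Longrightarrow> y j = v \<Longrightarrow> insg n j v (del n j y) = y"
  by (auto simp: fun_eq_iff insg_def del_def extensional_def)

lemma insg_last: "z \<in> extensional {..<n} \<Longrightarrow> insg n n v z = z(n := v)"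
  by (auto simp: fun_eq_iff insg_def extensional_def)

lemma map_insg: "j \<le> n \<Longrightarrow> map (insg n j v z) [0..<Suc n] = map z [0..<j] @ v # map z [j..<n]"
proof -
  assume j: "j \<le> n"
  have u: "[0..<Suc n] = [0..<j] @ j # map Suc [j..<n]"
  proof -
    have "[0..<Suc n] = [0..<j] @ [j..<Suc n]" using j by (metis le_SucI le_add_diff_inverse upt_add_eq_append zero_le)
    moreover have "[j..<Suc n] = j # [Suc j..<Suc n]" using j by (simp add: upt_conv_Cons)
    moreover have "[Suc j..<Suc n] = map Suc [j..<n]" by (simp add: map_Suc_upt)
    ultimately show ?thesis by simp
  qed
  have "map (insg n j v z) [0..<j] = map z [0..<j]" using j by (auto simp: insg_def)
  moreover have "map (insg n j v z) (map Suc [j..<n]) = map z [j..<n]" by (auto simp: insg_def)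
  moreover have "insg n j v z j = v" using j by (simp add: insg_def)
  ultimately show ?thesis by (simp only: u map_append list.map)
qed

lemma filter_insg: "j \<le> n \<Longrightarrow> \<not> P v \<Longrightarrow> filter P (map (insg n j v z) [0..<Suc n]) = filter P (map z [0..<n])"
proof -
  assume "j \<le> n" "\<not> P v"
  then have "[0..<n] = [0..<j] @ [j..<n]" by (metis le_add_diff_inverse upt_add_eq_append zero_le)
  then show ?thesis using \<open>j \<le> n\<close> \<open>\<not> P v\<close> by (simp add: map_insg del: upt_Suc)
qed



lemma one_sphere: "(1::complex) \<in> sphere 0 1" by simp

lemma upd_PiE: "f \<in> PiE S T \<Longrightarrow> x \<in> S \<Longrightarrow> y \<in> T x \<Longrightarrow> f(x := y) \<in> PiE S T"
  using PiE_fun_upd[of y T x f S] by (simp add: insert_absorb)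

lemma upd_PiE_Suc: "f \<in> PiE {..<n} T \<Longrightarrow> y \<in> T n \<Longrightarrow> f(n := y) \<in> PiE {..<Suc n} T"
  using PiE_fun_upd[of y T n f "{..<n}"] by (simp add: lessThan_Suc)

lemma james_relI: "y \<in> topspace (pow_top X n) \<Longrightarrow> Suc k < n \<Longrightarrow> y (Suc k) = x0 \<Longrightarrow>
  (y, y(k := x0, Suc k := y k)) \<in> james_rel X x0 n"
  unfolding james_rel_def by blast

lemma james_relE: "(a,b) \<in> james_rel X x0 n \<Longrightarrow>
  (\<And>k. a \<in> topspace (pow_top X n) \<Longrightarrow> Suc k < n \<Longrightarrow> a (Suc k) = x0 \<Longrightarrow> b = a(k := x0, Suc k := a k) \<Longrightarrow> P) \<Longrightarrow> P"
  unfolding james_rel_def by blast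

lemma james_step:
  assumes z: "z \<in> topspace (pow_top circle n)" and j: "j < n"
  shows "(insg n (Suc j) 1 z, insg n j 1 z) \<in> james_rel circle 1 (Suc n)"
proof -
  let ?y = "insg n (Suc j) (1::complex) z"
  have y: "?y \<in> topspace (pow_top circle (Suc n))"
    using z j by (simp add: top_pow insg_PiE)
  have eq: "insg n j 1 z = ?y(j := 1, Suc j := ?y j)"
    using j by (auto simp: fun_eq_iff insg_def)
  have "?y (Suc j) = 1" using j by (simp add: insg_def)
  then show ?thesis unfolding james_rel_def eq using y j by blast
qed

lemma james_slide:
  assumes z: "z \<in> topspace (pow_top circle n)" and j: "j \<le> n"
  shows "(insg n j 1 z, insg n n 1 z) \<in> RJn (Suc n)"
  using j
proof (induction j rule: inc_induct)
  case base
  show ?case using z by (intro gen_equiv_refl) (simp add: top_pow insg_PiE)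
next
  case (step m)
  have "(insg n (Suc m) 1 z, insg n m 1 z) \<in> RJn (Suc n)"
    using james_step[OF z step(2)] z step(2)
    by (intro gen_equiv_step) (auto simp: top_pow insg_PiE)
  then show ?case using step(3) by (blast intro: gen_equiv_sym gen_equiv_trans)
qed

lemma james_lift:
  assumes "(y, y') \<in> RJn n"
  shows "(y(n := 1), y'(n := 1)) \<in> RJn (Suc n)"
proof -
  have h1: "james_rel circle 1 n \<subseteq> topspace (pow_top circle n) \<times> topspace (pow_top circle n)"
  proof
    fix p assume "p \<in> james_rel circle 1 n"
    obtain a b where p: "p = (a, b)" by (cases p)
    with \<open>p \<in> james_rel circle 1 n\<close> have "(a,b) \<in> james_rel circle 1 n" by simp
    then obtain k where ab: "a \<in> topspace (pow_top circle n)" "Suc k < n" "p = (a, a(k := 1, Suc k := a k))"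
      by (rule james_relE) (simp add: p)
    have "a(k := 1, Suc k := a k) \<in> topspace (pow_top circle n)"
      using ab(1,2) unfolding top_pow by (intro upd_PiE) (auto simp: PiE_iff)
    then show "p \<in> topspace (pow_top circle n) \<times> topspace (pow_top circle n)" using ab by auto
  qed
  have h2: "(\<lambda>y. y(n := 1)) ` topspace (pow_top circle n) \<subseteq> topspace (pow_top circle (Suc n))"
    unfolding top_pow by (intro image_subsetI upd_PiE_Suc) simp_all
  have h3: "(a(n := 1), b(n := 1)) \<in> james_rel circle 1 (Suc n)" if "(a, b) \<in> james_rel circle 1 n" for a b
  proof -
  from that obtain k where ab: "a \<in> topspace (pow_top circle n)" "Suc k < n" "a (Suc k) = 1"
    "b = a(k := 1, Suc k := a k)"
    by (rule james_relE)
  have t: "a(n := 1) \<in> topspace (pow_top circle (Suc n))"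
    using ab(1) unfolding top_pow by (intro upd_PiE_Suc) simp_all
  have e: "b(n:=1) = (a(n:=1))(k := 1, Suc k := (a(n:=1)) k)"
    using ab by (simp add: fun_eq_iff)
  have o: "(a(n:=1)) (Suc k) = 1" using ab by simp
  have "(a(n:=1), (a(n:=1))(k := 1, Suc k := (a(n:=1)) k)) \<in> james_rel circle 1 (Suc n)"
    by (rule james_relI[OF t _ o]) (use ab(2) in simp)
  then show "(a(n := 1), b(n := 1)) \<in> james_rel circle 1 (Suc n)"
    by (simp only: e)
  qed
  show ?thesis by (rule gen_equiv_map[where f="\<lambda>y. y(n := 1)", OF h1 h2 h3 assms])
qed

lemma J_incl_cls:
  assumes z: "z \<in> topspace (pow_top circle n)"
  shows "J_incl circle 1 n (cls (RJn n) z) = cls (RJn (Suc n)) (z(n := 1))"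
proof -
  let ?y = "SOME y. y \<in> cls (RJn n) z"
  have "(z, ?y) \<in> RJn n" by (rule cls_SOME[OF z])
  then have "(z(n := 1), ?y(n := 1)) \<in> RJn (Suc n)" by (rule james_lift)
  then show ?thesis unfolding J_incl_def by (metis cls_eqI)
qed

lemma James_pt_incl:
  assumes z: "z \<in> topspace (pow_top circle n)"
  shows "James_pt circle 1 (Suc n) (z(n := 1)) = James_pt circle 1 n z"
proof -
  have C: "cls (RJn n) z \<in> topspace (J_n circle 1 n)"
    using z by (simp add: top_Jn cls_def quotientI)
  have z1: "z(n := 1) \<in> topspace (pow_top circle (Suc n))"
    using z unfolding top_pow by (intro upd_PiE_Suc) simp_all
  have C1: "cls (RJn (Suc n)) (z(n:=1)) \<in> topspace (J_n circle 1 (Suc n))"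
    using z1 by (simp add: top_Jn cls_def quotientI)
  have "((n, cls (RJn n) z), (Suc n, J_incl circle 1 n (cls (RJn n) z))) \<in> J_colim_rel circle 1"
    using C unfolding J_colim_rel_def by blast
  then have "((n, cls (RJn n) z), (Suc n, cls (RJn (Suc n)) (z(n:=1)))) \<in> RJ"
    using C C1 by (intro gen_equiv_step) (auto simp: J_incl_cls[OF z] top_Jsum)
  then show ?thesis unfolding James_pt_def by (metis cls_eqI)
qed

lemma James_pt_ins:
  assumes z: "z \<in> topspace (pow_top circle n)" and j: "j \<le> n"
  shows "James_pt circle 1 (Suc n) (insg n j 1 z) = James_pt circle 1 n z"
proof -
  have "cls (RJn (Suc n)) (insg n j 1 z) = cls (RJn (Suc n)) (insg n n 1 z)"
    by (rule cls_eqI[OF james_slide[OF z j]])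
  then have "James_pt circle 1 (Suc n) (insg n j 1 z) = James_pt circle 1 (Suc n) (insg n n 1 z)"
    unfolding James_pt_def by simp
  also have "insg n n 1 z = z(n := 1)"
    using z by (intro insg_last) (simp add: top_pow PiE_iff)
  finally show ?thesis using James_pt_incl[OF z] by (simp del: fun_upd_apply)
qed


abbreviation ce :: "real \<Rightarrow> complex" where "ce t \<equiv> exp (2 * pi * \<i> * complex_of_real t)"

lemma ce_norm: "ce t \<in> sphere 0 1"
  by (simp add: norm_exp_eq_Re)

lemma ce_0: "ce 0 = 1" by simp
lemma ce_1: "ce 1 = 1" by (simp add: exp_eq_1)

lemma ce_eq_1: assumes "0 \<le> t" "t \<le> 1" shows "ce t = 1 \<longleftrightarrow> t = 0 \<or> t = 1"
proof
  assume "ce t = 1"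
  then obtain m :: int where "2 * pi * t = of_int (2 * m) * pi" by (auto simp: exp_eq_1)
  then have "t = of_int m" by (simp add: field_simps)
  then show "t = 0 \<or> t = 1" using assms
    by (metis of_int_0_le_iff of_int_le_1_iff of_int_eq_0_iff int_one_le_iff_zero_less order.antisym 
        not_le of_int_1 zero_less_iff_neq_zero)
qed (auto simp: exp_eq_1)

lemma ce_inj: assumes "0 < s" "s < 1" "0 < t" "t < 1" "ce s = ce t" shows "s = t"
proof -
  from assms(5) obtain m :: int where m: "2 * pi * \<i> * complex_of_real s = 2 * pi * \<i> * complex_of_real t + (of_int (2 * m) * pi) * \<i>"
    by (auto simp: exp_eq)
  then have "Im (2 * pi * \<i> * complex_of_real s) = Im (2 * pi * \<i> * complex_of_real t + (of_int (2 * m) * pi) * \<i>)"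
    by simp
  then have "2 * pi * s = 2 * pi * t + 2 * m * pi" by simp
  then have "pi * (2 * s) = pi * (2 * t + 2 * m)" by (simp add: algebra_simps)
  then have "2 * s = 2 * t + 2 * m" using pi_neq_zero by simp
  then have "s = t + m" by simp
  then have "m = 0" using assms by linarith
  then show ?thesis using \<open>s = t + m\<close> by simp
qed

lemma ce_Arg: assumes "w \<in> sphere 0 1" shows "ce (Arg2pi w / (2 * pi)) = w"
proof -
  have "2 * pi * \<i> * complex_of_real (Arg2pi w / (2 * pi)) = \<i> * complex_of_real (Arg2pi w)"
    by (simp add: field_simps)
  moreover have "w = complex_of_real (norm w) * exp (\<i> * complex_of_real (Arg2pi w))"
    using Arg2pi[of w] by (simp add: is_Arg_def)
  ultimately show ?thesis using assms by simp
qed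

lemma Arg_range: "0 \<le> Arg2pi w / (2 * pi)" "Arg2pi w / (2 * pi) < 1"
  using Arg2pi_ge_0[of w] Arg2pi_lt_2pi[of w] by (auto simp: field_simps)

definition E :: "nat \<Rightarrow> (nat \<Rightarrow> real) \<Rightarrow> nat \<Rightarrow> complex" where
  "E n x = (\<lambda>k\<in>{..<n}. exp (2 * pi * \<i> * complex_of_real (x k)))"

lemma E_top: "E n x \<in> topspace (pow_top circle n)"
  by (simp add: E_def top_pow ce_norm)

lemma E_insg: "j \<le> m \<Longrightarrow> E (Suc m) (insg m j v x) = insg m j (ce v) (E m x)"
  by (auto simp: fun_eq_iff E_def insg_def)

lemma realization_relI: "x \<in> topspace (cube_top m) \<Longrightarrow> 1 \<le> i \<Longrightarrow> i \<le> Suc m \<Longrightarrow>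
   ((m, ((), x)), (Suc m, ((), coface (Suc m) i (if e then 1 else 0) x))) \<in> realization_rel Z_cubes Z_face"
  unfolding realization_rel_def Z_face_def Z_cubes_def by blast

lemma realization_relE: "(a, b) \<in> realization_rel Z_cubes Z_face \<Longrightarrow>
   (\<And>m i e x. a = (m, ((), x)) \<Longrightarrow> b = (Suc m, ((), coface (Suc m) i (if e then 1 else 0) x)) \<Longrightarrow>
      1 \<le> i \<Longrightarrow> i \<le> Suc m \<Longrightarrow> x \<in> topspace (cube_top m) \<Longrightarrow> P) \<Longrightarrow> P"
  unfolding realization_rel_def Z_face_def by (cases a; cases b) clarsimp

definition Fz :: "nat \<times> (unit \<times> (nat \<Rightarrow> real)) \<Rightarrow> (nat \<times> (nat \<Rightarrow> complex) set) set" where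
  "Fz p = James_pt circle 1 (fst p) (E (fst p) (snd (snd p)))"

lemma Fz_gen: assumes "(a, b) \<in> realization_rel Z_cubes Z_face" shows "Fz a = Fz b"
  using assms
proof (rule realization_relE)
  fix m i e x assume ab: "a = (m, (), x)" "b = (Suc m, (), coface (Suc m) i (if e then 1 else 0) x)"
    "1 \<le> i" "i \<le> Suc m" "x \<in> topspace (cube_top m)"
  have c: "ce (if e then 1 else 0) = 1" by (simp add: ce_1)
  have "Fz b = James_pt circle 1 (Suc m) (E (Suc m) (insg m (i - 1) (if e then 1 else 0) x))"
    using ab by (simp add: Fz_def coface_insg)
  also have "\<dots> = James_pt circle 1 (Suc m) (insg m (i - 1) 1 (E m x))"
    using ab by (simp only: E_insg c)
  also have "\<dots> = James_pt circle 1 m (E m x)"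
    using ab by (intro James_pt_ins E_top) simp
  finally show "Fz a = Fz b" using ab by (simp add: Fz_def)
qed

lemma Fz_wd: "(a, b) \<in> RZ \<Longrightarrow> Fz a = Fz b"
  by (rule gen_equiv_inv[OF Fz_gen])


definition WJ :: "nat \<Rightarrow> (nat \<Rightarrow> complex) \<Rightarrow> complex list" where
  "WJ n y = filter (\<lambda>w. w \<noteq> 1) (map y [0..<n])"

lemma WJ_james: assumes "(a, b) \<in> james_rel circle 1 n" shows "WJ n a = WJ n b"
  using assms
proof (rule james_relE)
  fix k assume a: "a \<in> topspace (pow_top circle n)" and k: "Suc k < n" and a1: "a (Suc k) = 1"
    and b: "b = a(k := 1, Suc k := a k)"
  obtain m where n: "n = Suc m" using k by (cases n) auto
  let ?d = "del m (Suc k) a"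
  have ext: "a \<in> extensional {..<Suc m}" using a n by (simp add: top_pow PiE_iff)
  have ea: "a = insg m (Suc k) 1 ?d"
    using insg_del[OF ext, of "Suc k" 1] k a1 n by simp
  have eb: "b = insg m k 1 ?d"
    using ext k n unfolding b by (auto simp: fun_eq_iff insg_def del_def extensional_def)
  have "WJ n a = filter (\<lambda>w. w \<noteq> 1) (map ?d [0..<m])"
    unfolding WJ_def n using k n by (subst ea) (rule filter_insg; simp)
  moreover have "WJ n b = filter (\<lambda>w. w \<noteq> 1) (map ?d [0..<m])"
    unfolding WJ_def n using k n by (subst eb) (rule filter_insg; simp)
  ultimately show ?thesis by simp
qed

definition WC :: "nat \<times> (nat \<Rightarrow> complex) set \<Rightarrow> complex list" where
  "WC p = WJ (fst p) (SOME y. y \<in> snd p)"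

lemma WC_cls: assumes "z \<in> topspace (pow_top circle n)" shows "WC (n, cls (RJn n) z) = WJ n z"
proof -
  have "WJ n z = WJ n (SOME y. y \<in> cls (RJn n) z)"
    by (rule gen_equiv_inv[where f="WJ n", OF WJ_james cls_SOME[OF assms]])
  then show ?thesis by (simp add: WC_def)
qed

lemma WJ_upd: "z \<in> topspace (pow_top circle n) \<Longrightarrow> WJ (Suc n) (z(n := 1)) = WJ n z"
proof -
  assume z: "z \<in> topspace (pow_top circle n)"
  have e: "z(n := 1) = insg n n 1 z" using z by (simp add: insg_last top_pow PiE_iff)
  show ?thesis unfolding WJ_def e by (rule filter_insg) simp_all
qed

lemma WC_gen: assumes "(p, q) \<in> J_colim_rel circle 1" shows "WC p = WC q"
proof -
  obtain n C where pq: "p = (n, C)" "q = (Suc n, J_incl circle 1 n C)" "C \<in> topspace (J_n circle 1 n)"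
    using assms unfolding J_colim_rel_def by blast
  then obtain z where z: "z \<in> topspace (pow_top circle n)" "C = cls (RJn n) z"
    by (auto simp: top_Jn cls_def elim: quotientE)
  have z1: "z(n := 1) \<in> topspace (pow_top circle (Suc n))"
    using z unfolding top_pow by (intro upd_PiE_Suc) simp_all
  show ?thesis
    using pq z by (simp add: WC_cls J_incl_cls WC_cls[OF z1] WJ_upd)
qed

lemma WC_wd: "(p, q) \<in> RJ \<Longrightarrow> WC p = WC q"
  by (rule gen_equiv_inv[OF WC_gen])

definition WZ :: "nat \<Rightarrow> (nat \<Rightarrow> real) \<Rightarrow> real list" where
  "WZ n x = filter (\<lambda>t. t \<noteq> 0 \<and> t \<noteq> 1) (map x [0..<n])"

lemma WJ_E: assumes "x \<in> topspace (cube_top n)" shows "WJ n (E n x) = map ce (WZ n x)"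
proof -
  have m: "map (E n x) [0..<n] = map ce (map x [0..<n])"
    unfolding map_map by (rule map_cong) (auto simp: E_def)
  have "WJ n (E n x) = map ce (filter ((\<lambda>w. w \<noteq> 1) \<circ> ce) (map x [0..<n]))"
    unfolding WJ_def m by (rule filter_map)
  also have "filter ((\<lambda>w. w \<noteq> 1) \<circ> ce) (map x [0..<n]) = WZ n x"
    unfolding WZ_def
  proof (rule filter_cong[OF refl])
    fix t assume "t \<in> set (map x [0..<n])"
    then have "0 \<le> t" "t \<le> 1" using assms by (auto simp: top_cube PiE_iff)
    then show "((\<lambda>w. w \<noteq> 1) \<circ> ce) t = (t \<noteq> 0 \<and> t \<noteq> 1)" using ce_eq_1 by auto
  qed
  finally show ?thesis .
qed


definition canon :: "real list \<Rightarrow> nat \<times> (unit \<times> (nat \<Rightarrow> real))" where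
  "canon w = (length w, ((), \<lambda>k\<in>{..<length w}. w ! k))"

lemma cs_mem: "x \<in> topspace (cube_top n) \<Longrightarrow> (n, ((), x)) \<in> topspace (cubes_sum Z_cubes)"
  by (simp add: top_cs top_cube)

lemma canon_rel: "x \<in> topspace (cube_top n) \<Longrightarrow> ((n, ((), x)), canon (WZ n x)) \<in> RZ"
proof (induction n arbitrary: x)
  case 0
  have "WZ 0 x = []" by (simp add: WZ_def)
  moreover have "x = (\<lambda>k\<in>{..<0}. undefined)" using 0 by (auto simp: top_cube PiE_iff extensional_def fun_eq_iff)
  ultimately have "canon (WZ 0 x) = (0, ((), x))" by (simp add: canon_def restrict_def)
  then show ?case using 0 by (simp add: gen_equiv_refl cs_mem)
next
  case (Suc m)
  have x: "x \<in> PiE {..<Suc m} (\<lambda>_. {0..1})" using Suc.prems by (simp add: top_cube)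
  show ?case
  proof (cases "\<exists>j<Suc m. x j = 0 \<or> x j = 1")
    case False
    then have "WZ (Suc m) x = map x [0..<Suc m]"
      unfolding WZ_def by (intro filter_True) auto
    moreover have "(\<lambda>k\<in>{..<Suc m}. map x [0..<Suc m] ! k) = x"
      using x by (auto simp: fun_eq_iff PiE_iff extensional_def simp del: upt_Suc)
    ultimately have "canon (WZ (Suc m) x) = (Suc m, ((), x))" by (simp add: canon_def del: upt_Suc)
    then show ?thesis using Suc.prems by (simp add: gen_equiv_refl cs_mem)
  next
    case True
    then obtain j where j: "j < Suc m" "x j = 0 \<or> x j = 1" by blast
    let ?d = "del m j x"
    have d: "?d \<in> topspace (cube_top m)" using x by (simp add: top_cube del_PiE)
    have ext: "x \<in> extensional {..<Suc m}" using x by (simp add: PiE_iff)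
    have xe: "x = coface (Suc m) (Suc j) (if x j = 1 then 1 else 0) ?d"
      unfolding coface_insg using insg_del[OF ext, of j] j by auto
    have "((m, ((), ?d)), (Suc m, ((), x))) \<in> realization_rel Z_cubes Z_face"
      using realization_relI[OF d, of "Suc j" "x j = 1"] j by (simp flip: xe)
    then have r1: "((m, ((), ?d)), (Suc m, ((), x))) \<in> RZ"
      using d Suc.prems by (intro gen_equiv_step cs_mem)
    have "WZ (Suc m) x = WZ m ?d"
    proof -
      have "x = insg m j (x j) ?d" using insg_del[OF ext, of j] j by auto
      then have "WZ (Suc m) x = filter (\<lambda>t. t \<noteq> 0 \<and> t \<noteq> 1) (map (insg m j (x j) ?d) [0..<Suc m])"
        unfolding WZ_def by simp
      also have "\<dots> = WZ m ?d" unfolding WZ_def by (rule filter_insg) (use j in auto)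
      finally show ?thesis .
    qed
    then have r2: "((m, ((), ?d)), canon (WZ (Suc m) x)) \<in> RZ" using Suc.IH[OF d] by (simp only:)
    show ?thesis using r1 r2 by (blast intro: gen_equiv_sym gen_equiv_trans)
  qed
qed

lemma Fz_inj:
  assumes a: "a \<in> topspace (cubes_sum Z_cubes)" and b: "b \<in> topspace (cubes_sum Z_cubes)"
    and eq: "Fz a = Fz b"
  shows "(a, b) \<in> RZ"
proof -
  obtain n x where an: "a = (n, ((), x))" "x \<in> topspace (cube_top n)" using a by (auto simp: top_cs top_cube)
  obtain m y where bm: "b = (m, ((), y))" "y \<in> topspace (cube_top m)" using b by (auto simp: top_cs top_cube)
  have in1: "(n, cls (RJn n) (E n x)) \<in> topspace (J_sum circle 1)"
    by (simp add: top_Jsum top_Jn cls_def quotientI E_top)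
  have in2: "(m, cls (RJn m) (E m y)) \<in> topspace (J_sum circle 1)"
    by (simp add: top_Jsum top_Jn cls_def quotientI E_top)
  have "cls RJ (n, cls (RJn n) (E n x)) = cls RJ (m, cls (RJn m) (E m y))"
    using eq an bm by (simp add: Fz_def James_pt_def)
  then have "((n, cls (RJn n) (E n x)), (m, cls (RJn m) (E m y))) \<in> RJ"
    using cls_eq_iff[OF in1 in2] by simp
  then have "WC (n, cls (RJn n) (E n x)) = WC (m, cls (RJn m) (E m y))" by (rule WC_wd)
  then have "WJ n (E n x) = WJ m (E m y)" by (simp add: WC_cls E_top)
  then have me: "map ce (WZ n x) = map ce (WZ m y)" by (simp add: WJ_E an bm)
  have sub: "set (WZ n x) \<union> set (WZ m y) \<subseteq> {0<..<1}"
    using an(2) bm(2) by (force simp: WZ_def top_cube PiE_iff)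
  have "inj_on ce {0<..<1}" by (intro inj_onI ce_inj) auto
  then have "WZ n x = WZ m y" using me sub by (meson inj_on_map_eq_map inj_on_subset)
  then have "canon (WZ n x) = canon (WZ m y)" by simp
  then show ?thesis using canon_rel[OF an(2)] canon_rel[OF bm(2)] an bm
    by (metis gen_equiv_sym gen_equiv_trans)
qed



lemma ce_cont: "continuous_map (top_of_set {0..1}) circle ce"
  unfolding circle_def
  by (auto simp: continuous_map_in_subtopology continuous_map_iff_continuous ce_norm
      intro!: continuous_intros)

lemma E_cont: "continuous_map (cube_top n) (pow_top circle n) (E n)"
  unfolding pow_top_def continuous_map_componentwise
proof (intro conjI ballI)
  show "E n ` topspace (cube_top n) \<subseteq> extensional {..<n}" by (auto simp: E_def)
next
  fix k assume k: "k \<in> {..<n}"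
  have "continuous_map (cube_top n) circle (ce \<circ> (\<lambda>x. x k))"
    using k unfolding cube_top_def
    by (intro continuous_map_compose[OF _ ce_cont] continuous_map_product_projection)
  then show "continuous_map (cube_top n) circle (\<lambda>x. E n x k)"
    by (rule continuous_map_eq) (use k in \<open>simp add: E_def\<close>)
qed

lemma E_surj: "E n ` topspace (cube_top n) = topspace (pow_top circle n)"
proof
  show "E n ` topspace (cube_top n) \<subseteq> topspace (pow_top circle n)" using E_top by auto
next
  show "topspace (pow_top circle n) \<subseteq> E n ` topspace (cube_top n)"
  proof
    fix z assume z: "z \<in> topspace (pow_top circle n)"
    let ?x = "\<lambda>k\<in>{..<n}. Arg2pi (z k) / (2 * pi)"
    have x: "?x \<in> topspace (cube_top n)"
      using Arg_range by (auto simp: top_cube less_imp_le)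
    have "E n ?x k = z k" for k
    proof (cases "k < n")
      case True
      then have "E n ?x k = ce (Arg2pi (z k) / (2 * pi))" by (simp add: E_def)
      also have "\<dots> = z k" using True z by (intro ce_Arg) (auto simp: top_pow PiE_iff)
      finally show ?thesis .
    next
      case False
      then show ?thesis using z by (simp add: E_def top_pow PiE_iff extensional_def)
    qed
    then have ex: "E n ?x = z" by (simp add: fun_eq_iff)
    show "z \<in> E n ` topspace (cube_top n)" by (rule image_eqI[where f="E n" and x="?x", OF sym[OF ex] x])
  qed
qed

lemma E_quot: "quotient_map (cube_top n) (pow_top circle n) (E n)"
proof (rule continuous_closed_imp_quotient_map[OF E_cont _ E_surj])
  have "compact_space (cube_top n)"
    unfolding cube_top_def compact_space_product_topology
    by (auto intro!: compact_space_subtopology simp: compactin_subtopology)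
  moreover have "Hausdorff_space (pow_top circle n)"
    unfolding pow_top_def Hausdorff_space_product_topology circle_def
    by (auto intro: Hausdorff_space_subtopology Hausdorff_space_euclidean)
  ultimately show "closed_map (cube_top n) (pow_top circle n) (E n)"
    using E_cont by (intro continuous_imp_closed_map)
qed

lemma equiv_J: "equiv (topspace (J_sum circle 1)) RJ" by (rule equiv_gen_equiv)
lemma equiv_Jn: "equiv (topspace (pow_top circle n)) (RJn n)" by (rule equiv_gen_equiv)
lemma equiv_Z: "equiv (topspace (cubes_sum Z_cubes)) RZ" by (rule equiv_gen_equiv)

lemma Fz_cont: "continuous_map (cubes_sum Z_cubes) (James circle 1) Fz"
  unfolding cubes_sum_def
proof (rule continuous_map_from_sum)
  fix n :: nat
  have c1: "continuous_map (prod_topology (discrete_topology (Z_cubes n)) (cube_top n)) (J_n circle 1 n)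
             (cls (RJn n) \<circ> (E n \<circ> snd))"
    unfolding J_n_def
    by (intro continuous_map_compose[OF _ continuous_map_cls[OF equiv_Jn]]
        continuous_map_compose[OF continuous_map_snd E_cont])
  have c2: "continuous_map (J_n circle 1 n) (James circle 1) (cls RJ \<circ> Pair n)"
    unfolding James_def
    by (intro continuous_map_compose[OF _ continuous_map_cls[OF equiv_J]])
       (simp add: J_sum_def continuous_map_component_injection)
  show "continuous_map (prod_topology (discrete_topology (Z_cubes n)) (cube_top n)) (James circle 1)
          (\<lambda>x. Fz (n, x))"
    using continuous_map_compose[OF c1 c2]
    by (simp add: o_def Fz_def James_pt_def)
qed

lemma incl_cont: "continuous_map (cube_top n) (realization Z_cubes Z_face) (\<lambda>x. cls RZ (n, ((), x)))"
proof -
  have c1: "continuous_map (cube_top n) (prod_topology (discrete_topology (Z_cubes n)) (cube_top n)) (\<lambda>x. ((), x))"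
    by (intro continuous_map_pairedI continuous_map_id[unfolded id_def]) (simp add: Z_cubes_def)
  have c2: "continuous_map (prod_topology (discrete_topology (Z_cubes n)) (cube_top n)) (realization Z_cubes Z_face)
              (cls RZ \<circ> Pair n)"
    unfolding realization_def
    by (intro continuous_map_compose[OF _ continuous_map_cls[OF equiv_Z]])
       (simp add: cubes_sum_def continuous_map_component_injection[of n UNIV "\<lambda>n. prod_topology (discrete_topology (Z_cubes n)) (cube_top n)", simplified])
  show ?thesis using continuous_map_compose[OF c1 c2] by (simp add: o_def)
qed


lemma top_real: "topspace (realization Z_cubes Z_face) = topspace (cubes_sum Z_cubes) // RZ"
  unfolding realization_def by (rule topspace_quot[OF equiv_Z])
lemma top_James: "topspace (James circle 1) = topspace (J_sum circle 1) // RJ"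
  unfolding James_def by (rule topspace_quot[OF equiv_J])

theorem proposition6p8:
  fixes F :: "nat \<times> (unit \<times> (nat \<Rightarrow> real)) \<Rightarrow> (nat \<times> (nat \<Rightarrow> complex) set) set"
  defines "F \<equiv> \<lambda>(n, (c, x)). James_pt circle 1 n (\<lambda>k\<in>{..<n}. exp (2 * pi * \<i> * complex_of_real (x k)))"
  shows "(\<forall>a b. (a, b) \<in> gen_equiv (topspace (cubes_sum Z_cubes)) (realization_rel Z_cubes Z_face)
                  \<longrightarrow> F a = F b)
       \<and> homeomorphic_map (realization Z_cubes Z_face) (James circle 1) (\<lambda>C. F (SOME a. a \<in> C))"
proof -
  have FF: "F = Fz" unfolding F_def by (auto simp: fun_eq_iff Fz_def E_def)
  define f where "f = (\<lambda>C. Fz (SOME a. a \<in> C))"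
  have fcls: "f (cls RZ a) = Fz a" if "a \<in> topspace (cubes_sum Z_cubes)" for a
    unfolding f_def using Fz_wd[OF cls_SOME[OF that]] by simp
  have inj: "inj_on f (topspace (realization Z_cubes Z_face))"
  proof (rule inj_onI)
    fix C D assume C: "C \<in> topspace (realization Z_cubes Z_face)" and D: "D \<in> topspace (realization Z_cubes Z_face)"
      and eq: "f C = f D"
    obtain a where a: "a \<in> topspace (cubes_sum Z_cubes)" "C = cls RZ a"
      using C by (auto simp: top_real cls_def elim: quotientE)
    obtain b where b: "b \<in> topspace (cubes_sum Z_cubes)" "D = cls RZ b"
      using D by (auto simp: top_real cls_def elim: quotientE)
    have "Fz a = Fz b" using eq a b fcls by simp
    then have "(a, b) \<in> RZ" by (rule Fz_inj[OF a(1) b(1)])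
    then show "C = D" using a b by (simp add: cls_eqI)
  qed
  have surj: "f ` topspace (realization Z_cubes Z_face) = topspace (James circle 1)"
  proof
    show "f ` topspace (realization Z_cubes Z_face) \<subseteq> topspace (James circle 1)"
    proof
      fix D assume "D \<in> f ` topspace (realization Z_cubes Z_face)"
      then obtain a where a: "a \<in> topspace (cubes_sum Z_cubes)" "D = f (cls RZ a)"
        by (auto simp: top_real cls_def elim!: quotientE)
      obtain n x where an: "a = (n, ((), x))" using a by (auto simp: top_cs)
      have "(n, cls (RJn n) (E n x)) \<in> topspace (J_sum circle 1)"
        by (simp add: top_Jsum top_Jn cls_def quotientI E_top)
      then show "D \<in> topspace (James circle 1)"
        using a an fcls by (simp add: top_James Fz_def James_pt_def cls_def quotientI)
    qed
  next
    show "topspace (James circle 1) \<subseteq> f ` topspace (realization Z_cubes Z_face)"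
    proof
      fix D assume "D \<in> topspace (James circle 1)"
      then obtain p where p: "p \<in> topspace (J_sum circle 1)" "D = cls RJ p"
        by (auto simp: top_James cls_def elim: quotientE)
      obtain n C where pn: "p = (n, C)" "C \<in> topspace (J_n circle 1 n)" using p by (auto simp: top_Jsum)
      obtain z where z: "z \<in> topspace (pow_top circle n)" "C = cls (RJn n) z"
        using pn by (auto simp: top_Jn cls_def elim: quotientE)
      obtain x where x: "x \<in> topspace (cube_top n)" "z = E n x"
        using z E_surj by blast
      have "D = Fz (n, ((), x))" using p pn z x by (simp add: Fz_def James_pt_def)
      also have "\<dots> = f (cls RZ (n, ((), x)))" using x by (simp add: fcls cs_mem)
      finally show "D \<in> f ` topspace (realization Z_cubes Z_face)"
        using x by (simp add: top_real cls_def quotientI cs_mem)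
    qed
  qed
  have fcont: "continuous_map (realization Z_cubes Z_face) (James circle 1) f"
    unfolding realization_def
  proof (rule continuous_map_from_quot[OF equiv_Z])
    show "continuous_map (cubes_sum Z_cubes) (James circle 1) (\<lambda>x. f (cls RZ x))"
      by (rule continuous_map_eq[OF Fz_cont]) (simp add: fcls)
  qed
  define g where "g = inv_into (topspace (realization Z_cubes Z_face)) f"
  have gf: "g (f C) = C" if "C \<in> topspace (realization Z_cubes Z_face)" for C
    unfolding g_def using inv_into_f_f[OF inj that] .
  have fg: "f (g D) = D" if "D \<in> topspace (James circle 1)" for D
    unfolding g_def using f_inv_into_f[of D f] that surj by simp
  have gcont: "continuous_map (James circle 1) (realization Z_cubes Z_face) g"
    unfolding James_def
  proof (rule continuous_map_from_quot[OF equiv_J])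
    have "continuous_map (sum_topology (J_n circle 1) UNIV) (realization Z_cubes Z_face) (\<lambda>p. g (cls RJ p))"
    proof (rule continuous_map_from_sum)
      fix n :: nat
      show "continuous_map (J_n circle 1 n) (realization Z_cubes Z_face) (\<lambda>C. g (cls RJ (n, C)))"
        unfolding J_n_def
      proof (rule continuous_map_from_quot[OF equiv_Jn])
        show "continuous_map (pow_top circle n) (realization Z_cubes Z_face)
                (\<lambda>y. g (cls RJ (n, cls (RJn n) y)))"
        proof (rule continuous_compose_quotient_map[OF E_quot])
          show "continuous_map (cube_top n) (realization Z_cubes Z_face)
                  ((\<lambda>y. g (cls RJ (n, cls (RJn n) y))) \<circ> E n)"
          proof (rule continuous_map_eq[OF incl_cont])
            fix x assume x: "x \<in> topspace (cube_top n)"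
            have "((\<lambda>y. g (cls RJ (n, cls (RJn n) y))) \<circ> E n) x = g (Fz (n, ((), x)))"
              by (simp add: Fz_def James_pt_def)
            also have "\<dots> = g (f (cls RZ (n, ((), x))))" using x by (simp add: fcls cs_mem)
            also have "\<dots> = cls RZ (n, ((), x))"
              using x by (intro gf) (simp add: top_real cls_def quotientI cs_mem)
            finally show "cls RZ (n, ((), x)) = ((\<lambda>y. g (cls RJ (n, cls (RJn n) y))) \<circ> E n) x" by simp
          qed
        qed
      qed
    qed
    then show "continuous_map (J_sum circle 1) (realization Z_cubes Z_face) (\<lambda>p. g (cls RJ p))"
      by (simp only: J_sum_def[symmetric])
  qed
  have "homeomorphic_map (realization Z_cubes Z_face) (James circle 1) f"
    unfolding homeomorphic_map_maps homeomorphic_maps_def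
    using fcont gcont gf fg by blast
  then show ?thesis using Fz_wd unfolding FF f_def by blast
qed


end
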